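(* Let $G$ be a bipartite graph of boxicity $b$. Then $G$ belongs to $(b+1)$-CBU.
   Context: Let $e_1,\ldots,e_d$ be the standard orthogonal basis of $\mathbb{R}^d$. An axis-parallel box in $\mathbb{R}^d$ is a product $I_1\times\cdots\times I_d$ of closed intervals of positive length. For $d\ge 1$, a graph $G$ belongs to $d$-CBU if one can assign to each vertex an axis-parallel box in $\mathbb{R}^d$ such that the boxes have pairwise disjoint interiors, two distinct vertices are adjacent if and only if their boxes intersect, and any two intersecting boxes intersect in a $(d-1)$-dimensional box orthogonal to $e_1$ (i.e. lying in a hyperplane orthogonal to $e_1$). The boxicity of a graph is the minimum dimension $b$ such that the graph is the intersection graph of axis-parallel boxes in $\mathbb{R}^b$. *)

theory Defs
  imports Complex_Main
begin

definition is_graph :: "'a set \<Rightarrow> ('a \<Rightarrow> 'a \<Rightarrow> bool) \<Rightarrow> bool" where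
  "is_graph V E \<longleftrightarrow> (\<forall>u v. E u v \<longrightarrow> u \<in> V \<and> v \<in> V \<and> u \<noteq> v \<and> E v u)"

definition bipartite :: "'a set \<Rightarrow> ('a \<Rightarrow> 'a \<Rightarrow> bool) \<Rightarrow> bool" where
  "bipartite V E \<longleftrightarrow> (\<exists>A B. A \<union> B = V \<and> A \<inter> B = {} \<and>
      (\<forall>u\<in>A. \<forall>v\<in>A. \<not> E u v) \<and> (\<forall>u\<in>B. \<forall>v\<in>B. \<not> E u v))"

(* An axis-parallel box in R^d assigned to vertex v is the product over the
   coordinates i < d of the closed intervals [lo v i, hi v i].
   Coordinate 0 corresponds to e_1. *)
definition valid_boxes :: "nat \<Rightarrow> 'a set \<Rightarrow> ('a \<Rightarrow> nat \<Rightarrow> real) \<Rightarrow> ('a \<Rightarrow> nat \<Rightarrow> real) \<Rightarrow> bool" where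
  "valid_boxes d V lo hi \<longleftrightarrow> (\<forall>v\<in>V. \<forall>i<d. lo v i < hi v i)"

definition boxes_meet :: "nat \<Rightarrow> ('a \<Rightarrow> nat \<Rightarrow> real) \<Rightarrow> ('a \<Rightarrow> nat \<Rightarrow> real) \<Rightarrow> 'a \<Rightarrow> 'a \<Rightarrow> bool" where
  "boxes_meet d lo hi u v \<longleftrightarrow> (\<forall>i<d. max (lo u i) (lo v i) \<le> min (hi u i) (hi v i))"

definition interiors_disjoint :: "nat \<Rightarrow> ('a \<Rightarrow> nat \<Rightarrow> real) \<Rightarrow> ('a \<Rightarrow> nat \<Rightarrow> real) \<Rightarrow> 'a \<Rightarrow> 'a \<Rightarrow> bool" where
  "interiors_disjoint d lo hi u v \<longleftrightarrow> \<not> (\<forall>i<d. max (lo u i) (lo v i) < min (hi u i) (hi v i))"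

(* the intersection box is a (d-1)-dimensional box orthogonal to e_1:
   degenerate (a single point) in coordinate 0, positive length in all others *)
definition contact_orth_e1 :: "nat \<Rightarrow> ('a \<Rightarrow> nat \<Rightarrow> real) \<Rightarrow> ('a \<Rightarrow> nat \<Rightarrow> real) \<Rightarrow> 'a \<Rightarrow> 'a \<Rightarrow> bool" where
  "contact_orth_e1 d lo hi u v \<longleftrightarrow>
     max (lo u 0) (lo v 0) = min (hi u 0) (hi v 0) \<and>
     (\<forall>i. 0 < i \<and> i < d \<longrightarrow> max (lo u i) (lo v i) < min (hi u i) (hi v i))"

definition box_rep :: "nat \<Rightarrow> 'a set \<Rightarrow> ('a \<Rightarrow> 'a \<Rightarrow> bool) \<Rightarrow> bool" where
  "box_rep d V E \<longleftrightarrow> (\<exists>lo hi. valid_boxes d V lo hi \<and>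
      (\<forall>u\<in>V. \<forall>v\<in>V. u \<noteq> v \<longrightarrow> (E u v \<longleftrightarrow> boxes_meet d lo hi u v)))"

definition boxicity :: "'a set \<Rightarrow> ('a \<Rightarrow> 'a \<Rightarrow> bool) \<Rightarrow> nat" where
  "boxicity V E = (LEAST b. box_rep b V E)"

definition CBU :: "nat \<Rightarrow> 'a set \<Rightarrow> ('a \<Rightarrow> 'a \<Rightarrow> bool) \<Rightarrow> bool" where
  "CBU d V E \<longleftrightarrow> 1 \<le> d \<and> (\<exists>lo hi. valid_boxes d V lo hi \<and>
      (\<forall>u\<in>V. \<forall>v\<in>V. u \<noteq> v \<longrightarrow>
         interiors_disjoint d lo hi u v \<and>
         (E u v \<longleftrightarrow> boxes_meet d lo hi u v) \<and>
         (boxes_meet d lo hi u v \<longrightarrow> contact_orth_e1 d lo hi u v)))"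

end

theory Submission
  imports Defs
begin

lemma rank_less:
  fixes S :: "real set"
  assumes "finite S" "x \<in> S" "y \<in> S"
  shows "card {z\<in>S. z < x} < card {z\<in>S. z < y} \<longleftrightarrow> x < y"
proof
  assume "x < y"
  then have "{z\<in>S. z < x} \<subset> {z\<in>S. z < y}" using assms by auto
  then show "card {z\<in>S. z < x} < card {z\<in>S. z < y}" using assms by (simp add: psubset_card_mono)
next
  assume h: "card {z\<in>S. z < x} < card {z\<in>S. z < y}"
  show "x < y"
  proof (rule ccontr)
    assume "\<not> x < y"
    then have "{z\<in>S. z < y} \<subseteq> {z\<in>S. z < x}" by auto
    then have "card {z\<in>S. z < y} \<le> card {z\<in>S. z < x}" using assms by (simp add: card_mono)
    then show False using h by simp
  qed
qed

lemma rank_coord: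
  fixes S :: "real set"
  assumes "finite S" "a \<in> S" "c \<in> S"
  defines "ra \<equiv> card {z\<in>S. z < a}" and "rc \<equiv> card {z\<in>S. z < c}"
  shows "(2 * real ra - 1/2 \<le> 2 * real rc + 1/2 \<longleftrightarrow> a \<le> c)"
    and "(2 * real ra - 1/2 < 2 * real rc + 1/2 \<longleftrightarrow> a \<le> c)"
proof -
  have e: "a \<le> c \<longleftrightarrow> ra \<le> rc" using rank_less[OF assms(1) assms(3) assms(2)]
    unfolding ra_def rc_def by linarith
  have "ra \<le> rc \<longleftrightarrow> real ra \<le> real rc" by simp
  moreover have "\<not> ra \<le> rc \<longrightarrow> real rc + 1 \<le> real ra" by simp
  ultimately show "(2 * real ra - 1/2 \<le> 2 * real rc + 1/2 \<longleftrightarrow> a \<le> c)"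
    and "(2 * real ra - 1/2 < 2 * real rc + 1/2 \<longleftrightarrow> a \<le> c)" using e by linarith+
qed

lemma box_rep_exists:
  assumes "finite V" "is_graph V E"
  shows "\<exists>d. box_rep d V E"
proof -
  obtain f where f0: "bij_betw f {0..<card V} V"
    using ex_bij_betw_nat_finite[OF assms(1)] by blast
  define n where "n = card V"
  have f: "bij_betw f {..<n} V" using f0 unfolding n_def by (simp add: lessThan_atLeast0)
  define lo where "lo = (\<lambda>v i. if v = f i then (0::real) else if E (f i) v then 1 else 2)"
  define hi where "hi = (\<lambda>v i. lo v i + 1)"
  have "valid_boxes n V lo hi" unfolding valid_boxes_def hi_def by simp
  moreover have "\<forall>u\<in>V. \<forall>v\<in>V. u \<noteq> v \<longrightarrow> (E u v \<longleftrightarrow> boxes_meet n lo hi u v)"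
  proof (intro ballI impI)
    fix u v assume uv: "u \<in> V" "v \<in> V" "u \<noteq> v"
    show "E u v \<longleftrightarrow> boxes_meet n lo hi u v"
    proof
      assume "E u v"
      then have "E v u" using assms(2) unfolding is_graph_def by blast
      then show "boxes_meet n lo hi u v" using \<open>E u v\<close> uv
        unfolding boxes_meet_def lo_def hi_def by auto
    next
      assume m: "boxes_meet n lo hi u v"
      show "E u v"
      proof (rule ccontr)
        assume ne: "\<not> E u v"
        obtain i where i: "i < n" "f i = u" using f uv(1) by (auto simp: bij_betw_def)
        have "lo u i = 0" "lo v i = 2" using i ne uv(3) unfolding lo_def by auto
        then show False using m i unfolding boxes_meet_def hi_def by force
      qed
    qed
  qed
  ultimately show ?thesis unfolding box_rep_def by blast
qed

theorem mainTheorem1: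
  fixes V :: "'a set" and E :: "'a \<Rightarrow> 'a \<Rightarrow> bool" and b :: nat
  assumes "finite V" and "is_graph V E" and "bipartite V E"
    and "boxicity V E = b"
  shows "CBU (b + 1) V E"
proof -
  have "box_rep b V E"
    using LeastI_ex[OF box_rep_exists[OF assms(1,2)]] assms(4) unfolding boxicity_def by simp
  then obtain lo hi where vb: "valid_boxes b V lo hi"
    and rep: "\<forall>u\<in>V. \<forall>v\<in>V. u \<noteq> v \<longrightarrow> (E u v \<longleftrightarrow> boxes_meet b lo hi u v)"
    unfolding box_rep_def by blast
  obtain A B where AB: "A \<union> B = V" "A \<inter> B = {}" "\<forall>u\<in>A. \<forall>v\<in>A. \<not> E u v"
    "\<forall>u\<in>B. \<forall>v\<in>B. \<not> E u v" using assms(3) unfolding bipartite_def by blast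
  define S where "S = (\<lambda>j. (\<lambda>v. lo v j) ` V \<union> (\<lambda>v. hi v j) ` V)"
  have fS: "finite (S j)" for j using assms(1) unfolding S_def by simp
  define rk where "rk = (\<lambda>j x. card {z\<in>S j. z < x})"
  define lo' where "lo' = (\<lambda>v i. if i = 0 then (if v \<in> A then 0 else 1)
      else 2 * real (rk (i - 1) (lo v (i - 1))) - 1/2)"
  define hi' where "hi' = (\<lambda>v i. if i = 0 then (if v \<in> A then 1 else 2)
      else 2 * real (rk (i - 1) (hi v (i - 1))) + 1/2)"
  have key1: "lo' u (Suc j) \<le> hi' v (Suc j) \<longleftrightarrow> lo u j \<le> hi v j"
    and key2: "lo' u (Suc j) < hi' v (Suc j) \<longleftrightarrow> lo u j \<le> hi v j"
    if "u \<in> V" "v \<in> V" for u v j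
  proof -
    have s: "lo u j \<in> S j" "hi v j \<in> S j" using that unfolding S_def by auto
    show "lo' u (Suc j) \<le> hi' v (Suc j) \<longleftrightarrow> lo u j \<le> hi v j"
      using rank_coord(1)[OF fS s] unfolding lo'_def hi'_def rk_def by simp
    show "lo' u (Suc j) < hi' v (Suc j) \<longleftrightarrow> lo u j \<le> hi v j"
      using rank_coord(2)[OF fS s] unfolding lo'_def hi'_def rk_def by simp
  qed
  have km: "max (lo' u (Suc j)) (lo' v (Suc j)) \<le> min (hi' u (Suc j)) (hi' v (Suc j))
      \<longleftrightarrow> max (lo u j) (lo v j) \<le> min (hi u j) (hi v j)"
    and ks: "max (lo' u (Suc j)) (lo' v (Suc j)) < min (hi' u (Suc j)) (hi' v (Suc j))
      \<longleftrightarrow> max (lo u j) (lo v j) \<le> min (hi u j) (hi v j)"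
    if "u \<in> V" "v \<in> V" for u v j
    using key1[OF that] key2[OF that] key1[OF that(2,1)] key2[OF that(2,1)]
      key1[OF that(1,1)] key1[OF that(2,2)] key2[OF that(1,1)] key2[OF that(2,2)]
    by auto
  have valid: "valid_boxes (b + 1) V lo' hi'"
    unfolding valid_boxes_def
  proof (intro ballI allI impI)
    fix v i assume v: "v \<in> V" and i: "i < b + 1"
    show "lo' v i < hi' v i"
    proof (cases i)
      case 0 then show ?thesis unfolding lo'_def hi'_def by simp
    next
      case (Suc j)
      then have "lo v j < hi v j" using vb v i unfolding valid_boxes_def by simp
      then show ?thesis using key2[OF v v, of j] Suc by simp
    qed
  qed
  have meet_iff: "boxes_meet (b + 1) lo' hi' u v \<longleftrightarrow> boxes_meet b lo hi u v"
    if "u \<in> V" "v \<in> V" for u v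
  proof -
    have c0: "max (lo' u 0) (lo' v 0) \<le> min (hi' u 0) (hi' v 0)"
      unfolding lo'_def hi'_def by auto
    have "boxes_meet (b + 1) lo' hi' u v \<longleftrightarrow>
      (\<forall>j<b. max (lo' u (Suc j)) (lo' v (Suc j)) \<le> min (hi' u (Suc j)) (hi' v (Suc j)))"
      unfolding boxes_meet_def using c0 by (auto simp: less_Suc_eq_0_disj)
    also have "\<dots> \<longleftrightarrow> boxes_meet b lo hi u v"
      unfolding boxes_meet_def using km[OF that] by simp
    finally show ?thesis .
  qed
  have "\<forall>u\<in>V. \<forall>v\<in>V. u \<noteq> v \<longrightarrow>
         interiors_disjoint (b + 1) lo' hi' u v \<and>
         (E u v \<longleftrightarrow> boxes_meet (b + 1) lo' hi' u v) \<and>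
         (boxes_meet (b + 1) lo' hi' u v \<longrightarrow> contact_orth_e1 (b + 1) lo' hi' u v)"
  proof (intro ballI impI conjI)
    fix u v assume u: "u \<in> V" and v: "v \<in> V" and uv: "u \<noteq> v"
    have Eiff: "E u v \<longleftrightarrow> boxes_meet (b + 1) lo' hi' u v"
      using rep u v uv meet_iff[OF u v] by simp
    then show "E u v \<longleftrightarrow> boxes_meet (b + 1) lo' hi' u v" .
    have diffpart: "(u \<in> A \<and> v \<in> B) \<or> (u \<in> B \<and> v \<in> A)" if "E u v"
      using AB u v that by blast
    have c0eq: "max (lo' u 0) (lo' v 0) = min (hi' u 0) (hi' v 0)" if "E u v"
      using diffpart[OF that] AB(2) unfolding lo'_def hi'_def by auto
    show "interiors_disjoint (b + 1) lo' hi' u v"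
    proof (cases "E u v")
      case True
      then show ?thesis using c0eq[OF True] unfolding interiors_disjoint_def by force
    next
      case False
      then have "\<not> boxes_meet b lo hi u v" using rep u v uv by simp
      then obtain j where j: "j < b" "\<not> max (lo u j) (lo v j) \<le> min (hi u j) (hi v j)"
        unfolding boxes_meet_def by auto
      then have "\<not> max (lo' u (Suc j)) (lo' v (Suc j)) < min (hi' u (Suc j)) (hi' v (Suc j))"
        using ks[OF u v] by simp
      then show ?thesis unfolding interiors_disjoint_def using j(1) by force
    qed
    assume m: "boxes_meet (b + 1) lo' hi' u v"
    then have e: "E u v" using Eiff by simp
    have bm: "boxes_meet b lo hi u v" using m meet_iff[OF u v] by simp
    show "contact_orth_e1 (b + 1) lo' hi' u v"
      unfolding contact_orth_e1_def
    proof (intro conjI allI impI)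
      show "max (lo' u 0) (lo' v 0) = min (hi' u 0) (hi' v 0)" using c0eq[OF e] .
    next
      fix i assume i: "0 < i \<and> i < b + 1"
      then obtain j where j: "i = Suc j" "j < b" by (cases i) auto
      then have "max (lo u j) (lo v j) \<le> min (hi u j) (hi v j)"
        using bm unfolding boxes_meet_def by simp
      then show "max (lo' u i) (lo' v i) < min (hi' u i) (hi' v i)"
        using ks[OF u v] j by simp
    qed
  qed
  then show ?thesis unfolding CBU_def using valid by (intro conjI exI[of _ lo'] exI[of _ hi']) auto
qed

end
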